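(* Let $p\ge2$ be an integer. (1) (With bias.) There exist $W\in\mathbb{R}^{2\times p}$, $V\in\mathbb{R}^{p\times 2}$, $b\in\mathbb{R}^2$ such that the network $s^\theta(x)=V\sin(Wx+b)$ satisfies $\mathbb{P}_{(X,Y)\sim\mathcal{D}_m}[h_\theta(X)=Y]=1$ for every integer $m\ge2$. (2) (Without bias.) Let $d=\lfloor (p-1)/2\rfloor$. There exist $W\in\mathbb{R}^{d\times p}$, $V\in\mathbb{R}^{p\times d}$ such that the network $s^\theta(x)=V\sin(Wx)$ satisfies, for every integer $m\ge 2$: if $p$ is odd then $\mathbb{P}_{(X,Y)\sim\mathcal{D}_m}[h_\theta(X)=Y]\ge 1-\frac1p$, and if $p$ is even then $\mathbb{P}_{(X,Y)\sim\mathcal{D}_m}[h_\theta(X)=Y]\ge 1-\frac2p$.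
   Context: Let $[p]=\{0,1,\dots,p-1\}$ and let $e_r$ ($r\in[p]$) be the standard basis vectors of $\mathbb{R}^p$. For an integer $m\ge1$, let $\mathcal{X}_m=\{x\in\{0,1,\dots,m\}^p:\ \|x\|_1=m\}$. The distribution $\mathcal{D}_m$ on $\mathcal{X}_m\times[p]$ is that of $(X,Y)$ where $s_1,\dots,s_m$ are i.i.d. uniform on $[p]$, $X=\sum_{i=1}^m e_{s_i}$ and $Y=(\sum_{i=1}^m s_i)\bmod p$. The function $\sin$ is applied entrywise. For a score vector $s^\theta(x)\in\mathbb{R}^p$ with coordinates indexed by $[p]$, the predictor is $h_\theta(x)=\ell$ if $s^\theta_\ell(x)>s^\theta_k(x)$ for all $k\ne\ell$, and $h_\theta(x)=\bot$ (an invalid prediction, never equal to any label) otherwise. *)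

theory Defs
  imports Complex_Main
begin

text \<open>Vectors in R^p are functions nat => real, indexed by [p] = {0..<p};
  a matrix A in R^(a x b) is a function nat => nat => real, entry A i j with i<a, j<b.\<close>

definition score :: "nat \<Rightarrow> nat \<Rightarrow> (nat \<Rightarrow> nat \<Rightarrow> real) \<Rightarrow> (nat \<Rightarrow> nat \<Rightarrow> real)
    \<Rightarrow> (nat \<Rightarrow> real) \<Rightarrow> (nat \<Rightarrow> real) \<Rightarrow> nat \<Rightarrow> real" where
  "score p d W V b x l = (\<Sum>j<d. V l j * sin ((\<Sum>r<p. W j r * x r) + b j))"

definition predictor :: "nat \<Rightarrow> ((nat \<Rightarrow> real) \<Rightarrow> nat \<Rightarrow> real) \<Rightarrow> (nat \<Rightarrow> real) \<Rightarrow> nat option" where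
  "predictor p s x =
     (if \<exists>l<p. \<forall>k<p. k \<noteq> l \<longrightarrow> s x l > s x k
      then Some (THE l. l < p \<and> (\<forall>k<p. k \<noteq> l \<longrightarrow> s x l > s x k)) else None)"

text \<open>Input X = sum of e_{s_i} for the sample sequence ss = [s_1,...,s_m].\<close>
definition Xvec :: "nat list \<Rightarrow> nat \<Rightarrow> real" where
  "Xvec ss r = real (length (filter (\<lambda>i. i = r) ss))"

definition Ylab :: "nat \<Rightarrow> nat list \<Rightarrow> nat" where
  "Ylab p ss = sum_list ss mod p"

text \<open>Sequences (s_1,...,s_m) in [p]^m; under D_m they are uniformly distributed.\<close>
definition samples :: "nat \<Rightarrow> nat \<Rightarrow> nat list set" where
  "samples p m = {ss. length ss = m \<and> set ss \<subseteq> {0..<p}}"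

text \<open>P_{(X,Y)~D_m}[h(X) = Y] for a predictor h (uniform i.i.d. s_i, so counting).\<close>
definition accuracy :: "nat \<Rightarrow> nat \<Rightarrow> ((nat \<Rightarrow> real) \<Rightarrow> nat option) \<Rightarrow> real" where
  "accuracy p m h =
     real (card {ss \<in> samples p m. h (Xvec ss) = Some (Ylab p ss)}) / real p ^ m"

end

theory Submission imports Defs begin

lemma sin_nat_period: "sin (x + 2*pi*real n) = sin x"
proof -
  have "sin (2*pi*real n) = 0" "cos (2*pi*real n) = 1"
    using sin_int_2pin[of "int n"] cos_int_2pin[of "int n"] by simp_all
  thus ?thesis by (simp add: sin_add)
qed

lemma Xvec_Cons: "Xvec (a # ss) r = Xvec ss r + (if r = a then 1 else 0)"
  by (simp add: Xvec_def)

lemma lin_sum: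
  assumes "set ss \<subseteq> {0..<p}"
  shows "(\<Sum>r<p. c * real r * Xvec ss r) = c * real (sum_list ss)"
  using assms
proof (induction ss)
  case Nil
  then show ?case by (simp add: Xvec_def)
next
  case (Cons a ss)
  have ap: "a < p" using Cons.prems by auto
  have "(\<Sum>r<p. c * real r * Xvec (a#ss) r) = (\<Sum>r<p. c * real r * Xvec ss r) + (\<Sum>r<p. (if r = a then c * real r else 0))"
    unfolding sum.distrib[symmetric] by (rule sum.cong) (auto simp: Xvec_Cons algebra_simps)
  also have "(\<Sum>r<p. (if r = a then c * real r else 0)) = c * real a"
    using ap by (simp add: sum.delta)
  finally show ?case using Cons by (simp add: algebra_simps)
qed

lemma predictor_some:
  assumes "l < p" "\<And>k. k < p \<Longrightarrow> k \<noteq> l \<Longrightarrow> s x k < s x l"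
  shows "predictor p s x = Some l"
proof -
  have ex: "\<exists>l<p. \<forall>k<p. k \<noteq> l \<longrightarrow> s x l > s x k" using assms by blast
  have "(THE l. l < p \<and> (\<forall>k<p. k \<noteq> l \<longrightarrow> s x l > s x k)) = l"
  proof (rule the_equality)
    show "l < p \<and> (\<forall>k<p. k \<noteq> l \<longrightarrow> s x l > s x k)" using assms by blast
  next
    fix l' assume "l' < p \<and> (\<forall>k<p. k \<noteq> l' \<longrightarrow> s x l' > s x k)"
    hence h: "\<forall>k<p. k \<noteq> l' \<longrightarrow> s x l' > s x k" "l' < p" by auto
    show "l' = l"
    proof (rule ccontr)
      assume "l' \<noteq> l"
      hence "s x l' < s x l" "s x l < s x l'" using assms h by auto
      thus False by simp
    qed
  qed
  thus ?thesis using ex by (simp add: predictor_def)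
qed

lemma finite_samples: "finite (samples p m)"
  unfolding samples_def using finite_lists_length_eq[of "{0..<p}" m] by (simp add: conj_commute)

lemma card_samples: "card (samples p m) = p ^ m"
  unfolding samples_def using card_lists_length_eq[of "{0..<p}" m] by (simp add: conj_commute)

lemma card_residue:
  assumes "m \<ge> 1" "p > 0"
  shows "card {ss \<in> samples p m. sum_list ss mod p = c} \<le> p ^ (m - 1)"
proof -
  define h where "h t = nat ((int c - int (sum_list t)) mod int p)" for t
  have sub: "{ss \<in> samples p m. sum_list ss mod p = c} \<subseteq> (\<lambda>t. h t # t) ` samples p (m - 1)"
  proof
    fix ss assume "ss \<in> {ss \<in> samples p m. sum_list ss mod p = c}"
    hence ss: "length ss = m" "set ss \<subseteq> {0..<p}" "sum_list ss mod p = c" by (auto simp: samples_def)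
    then obtain x t where xt: "ss = x # t" using assms by (cases ss) auto
    have xp: "x < p" using ss xt by auto
    have "(x + sum_list t) mod p = c" using ss xt by simp
    hence "int (x + sum_list t) mod int p = int c" by (metis of_nat_mod)
    hence "(int c - int (sum_list t)) mod int p = (int (x + sum_list t) mod int p - int (sum_list t)) mod int p" by simp
    also have "\<dots> = int x mod int p" by (simp add: mod_diff_left_eq)
    also have "\<dots> = int x" using xp by simp
    finally have "h t = x" by (simp add: h_def)
    moreover have "t \<in> samples p (m - 1)" using ss xt by (auto simp: samples_def)
    ultimately show "ss \<in> (\<lambda>t. h t # t) ` samples p (m - 1)" using xt by blast
  qed
  have "card {ss \<in> samples p m. sum_list ss mod p = c} \<le> card ((\<lambda>t. h t # t) ` samples p (m - 1))"
    by (rule card_mono[OF finite_imageI[OF finite_samples] sub])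
  also have "\<dots> \<le> card (samples p (m - 1))" by (rule card_image_le[OF finite_samples])
  finally show ?thesis by (simp add: card_samples)
qed


lemma reduce_mod:
  assumes "p > 0"
  shows "sin (2*pi/real p * real k * real S) = sin (2*pi/real p * real k * real (S mod p))"
    and "cos (2*pi/real p * real k * real S) = cos (2*pi/real p * real k * real (S mod p))"
proof -
  have S: "real S = real (S div p) * real p + real (S mod p)"
    by (metis of_nat_add of_nat_mult div_mult_mod_eq)
  have e: "2*pi/real p * real k * real S = 2*pi/real p * real k * real (S mod p) + 2*pi*real (k * (S div p))"
    using assms unfolding S by (simp add: field_simps)
  show "sin (2*pi/real p * real k * real S) = sin (2*pi/real p * real k * real (S mod p))"
    unfolding e by (rule sin_nat_period)
  have "sin (2*pi*real (k * (S div p))) = 0" "cos (2*pi*real (k * (S div p))) = 1"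
    using sin_int_2pin[of "int (k * (S div p))"] cos_int_2pin[of "int (k * (S div p))"] by simp_all
  thus "cos (2*pi/real p * real k * real S) = cos (2*pi/real p * real k * real (S mod p))"
    unfolding e by (simp add: cos_add)
qed

lemma dirichlet:
  "2 * sin (x/2) * (\<Sum>k<d. cos (real (Suc k) * x)) = sin ((real d + 1/2) * x) - sin (x/2)"
proof (induction d)
  case 0
  then show ?case by simp
next
  case (Suc d)
  have "sin ((real (Suc d) + 1/2) * x) - sin ((real d + 1/2) * x) = 2 * sin (x/2) * cos (real (Suc d) * x)"
    by (simp add: sin_diff_sin algebra_simps add_divide_distrib)
  then show ?case using Suc by (simp add: algebra_simps)
qed

lemma Cform:
  assumes p: "p \<ge> 2" and nd: "\<not> int p dvd j"
  shows "(\<Sum>k<(p - 1) div 2. cos (real (Suc k) * (2*pi*of_int j/real p)))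
          = - (1 + (if even p then cos (pi * of_int j) else 0)) / 2"
proof -
  define x where "x = 2*pi*of_int j/real p"
  define d where "d = (p - 1) div 2"
  have pp: "real p > 0" using p by simp
  have sx: "sin (x/2) \<noteq> 0"
  proof
    assume "sin (x/2) = 0"
    then obtain i :: int where "x/2 = of_int i * pi" by (auto simp: sin_zero_iff_int2)
    hence "pi * of_int j / real p = pi * of_int i" by (simp add: x_def mult.commute)
    hence "of_int j = real p * of_int i" using pp by (simp add: field_simps)
    hence "j = int p * i" by (metis of_int_eq_iff of_int_mult of_int_of_nat_eq)
    thus False using nd by simp
  qed
  have D: "2 * sin (x/2) * (\<Sum>k<d. cos (real (Suc k) * x)) = sin ((real d + 1/2) * x) - sin (x/2)"
    by (rule dirichlet)
  have key: "sin ((real d + 1/2) * x) = - (if even p then cos (pi * of_int j) else 0) * sin (x/2)"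
  proof (cases "even p")
    case True
    then obtain q where q: "p = 2*q" by auto
    hence "d = q - 1" "q \<ge> 1" using p by (auto simp: d_def)
    hence "real d + 1/2 = real p / 2 - 1/2" using q by (simp add: of_nat_diff)
    hence "(real d + 1/2) * x = (real p / 2 - 1/2) * x" by simp
    also have "\<dots> = pi * of_int j - x/2" using pp by (simp add: x_def field_simps)
    finally have "(real d + 1/2) * x = pi * of_int j - x/2" .
    moreover have "sin (pi * of_int j) = 0"
      by (metis mult.commute sin_zero_iff_int2)
    ultimately show ?thesis using True by (simp add: sin_diff)
  next
    case False
    then obtain q where q: "p = 2*q+1" using oddE by blast
    hence "d = q" by (simp add: d_def)
    hence "real d + 1/2 = real p / 2" using q by simp
    hence "(real d + 1/2) * x = (real p / 2) * x" by simp
    also have "\<dots> = pi * of_int j" using pp by (simp add: x_def field_simps)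
    finally have "(real d + 1/2) * x = pi * of_int j" .
    moreover have "sin (pi * of_int j) = 0"
      by (metis mult.commute sin_zero_iff_int2)
    ultimately show ?thesis using False by simp
  qed
  have "2 * sin (x/2) * (\<Sum>k<d. cos (real (Suc k) * x)) = 2 * sin (x/2) * (- (1 + (if even p then cos (pi * of_int j) else 0)) / 2)"
    using D key by (simp add: algebra_simps)
  hence "(\<Sum>k<d. cos (real (Suc k) * x)) = - (1 + (if even p then cos (pi * of_int j) else 0)) / 2"
    using sx by simp
  thus ?thesis by (simp add: x_def d_def)
qed


definition Gs :: "nat \<Rightarrow> nat \<Rightarrow> nat \<Rightarrow> real" where
  "Gs p l t = (\<Sum>k<(p - 1) div 2. sin (2*pi/real p * real (Suc k) * real l) * sin (2*pi/real p * real (Suc k) * real t))"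

definition Cs :: "nat \<Rightarrow> real \<Rightarrow> real" where
  "Cs p x = (\<Sum>k<(p - 1) div 2. cos (real (Suc k) * x))"

lemma Gs_split:
  assumes "p > 0"
  shows "2 * Gs p l t = Cs p (2*pi*of_int (int l - int t)/real p) - Cs p (2*pi*of_int (int l + int t)/real p)"
proof -
  have "2 * Gs p l t = (\<Sum>k<(p - 1) div 2. cos (real (Suc k) * (2*pi*of_int (int l - int t)/real p)) - cos (real (Suc k) * (2*pi*of_int (int l + int t)/real p)))"
    unfolding Gs_def sum_distrib_left
  proof (rule sum.cong[OF refl])
    fix k
    define A where "A = 2*pi/real p * real (Suc k) * real l"
    define B where "B = 2*pi/real p * real (Suc k) * real t"
    have 1: "A - B = real (Suc k) * (2*pi*of_int (int l - int t)/real p)"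
      unfolding A_def B_def using assms by (simp add: field_simps)
    have 2: "A + B = real (Suc k) * (2*pi*of_int (int l + int t)/real p)"
      unfolding A_def B_def using assms by (simp add: field_simps)
    show "2 * (sin (2*pi/real p * real (Suc k) * real l) * sin (2*pi/real p * real (Suc k) * real t)) =
      cos (real (Suc k) * (2*pi*of_int (int l - int t)/real p)) - cos (real (Suc k) * (2*pi*of_int (int l + int t)/real p))"
      unfolding A_def[symmetric] B_def[symmetric] 1[symmetric] 2[symmetric] sin_times_sin by simp
  qed
  thus ?thesis by (simp add: Cs_def sum_subtractf)
qed

lemma Cs_dvd:
  assumes "p > 0" "int p dvd j"
  shows "Cs p (2*pi*of_int j/real p) = real ((p - 1) div 2)"
proof -
  obtain i where i: "j = int p * i" using assms by (auto elim: dvdE)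
  have "cos (real (Suc k) * (2*pi*of_int j/real p)) = 1" for k
  proof -
    have "real (Suc k) * (2*pi*of_int j/real p) = (2*pi) * of_int (int (Suc k) * i)"
      using assms(1) by (simp add: i field_simps)
    thus ?thesis by (simp only: cos_int_2pin)
  qed
  thus ?thesis by (simp add: Cs_def)
qed

lemma Cs_ndvd:
  assumes "p \<ge> 2" "\<not> int p dvd j"
  shows "Cs p (2*pi*of_int j/real p) = - (1 + (if even p then cos (pi * of_int j) else 0)) / 2"
  using Cform[OF assms] by (simp add: Cs_def)

lemma Gs_lt:
  assumes p: "p \<ge> 2" and t: "t < p" "t \<noteq> 0" "2 * t \<noteq> p" and l: "l < p" "l \<noteq> t"
  shows "Gs p l t < Gs p t t"
proof -
  have p0: "p > 0" using p by simp
  define e where "e = (\<lambda>j::int. if even p then cos (pi * of_int j) else 0)"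
  have e_bd: "e j \<ge> -1" "e j \<le> 1" for j by (auto simp: e_def)
  have n1: "\<not> int p dvd (int l - int t)"
  proof
    assume "int p dvd (int l - int t)"
    hence "int l mod int p = int t mod int p" by (simp add: mod_eq_dvd_iff)
    thus False using l t by simp
  qed
  have n2: "\<not> int p dvd (int t + int t)"
  proof
    assume "int p dvd (int t + int t)"
    then obtain q where q: "int t + int t = int p * q" by (auto elim: dvdE)
    have "q > 0"
    proof (rule ccontr)
      assume "\<not> q > 0"
      hence "int p * q \<le> 0" by (simp add: mult_nonneg_nonpos)
      thus False using q t by simp
    qed
    moreover have "q < 2"
    proof (rule ccontr)
      assume "\<not> q < 2"
      hence "int p * q \<ge> int p * 2" by (intro mult_left_mono) auto
      thus False using q t by linarith
    qed
    ultimately have "q = 1" by simp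
    thus False using q t by simp
  qed
  have "2 * Gs p t t = real ((p - 1) div 2) - Cs p (2*pi*of_int (int t + int t)/real p)"
    using Gs_split[OF p0, of t t] Cs_dvd[OF p0, of 0] by simp
  also have "Cs p (2*pi*of_int (int t + int t)/real p) = - (1 + e (int t + int t)) / 2"
    using Cs_ndvd[OF p n2] by (simp add: e_def)
  finally have Gtt: "2 * Gs p t t = real ((p - 1) div 2) + (1 + e (int t + int t)) / 2" by (simp add: field_simps)
  have "e (int t + int t) = (if even p then 1 else 0)"
  proof -
    have "cos (pi * of_int (int t + int t)) = 1"
      using cos_int_2pin[of "int t"] by (simp add: algebra_simps)
    thus ?thesis by (simp add: e_def)
  qed
  hence pos: "2 * Gs p t t > 0" using Gtt by simp
  have C1: "Cs p (2*pi*of_int (int l - int t)/real p) = - (1 + e (int l - int t)) / 2"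
    using Cs_ndvd[OF p n1] by (simp add: e_def)
  have "2 * Gs p l t \<le> 0"
  proof (cases "int p dvd (int l + int t)")
    case True
    show ?thesis using Gs_split[OF p0, of l t] Cs_dvd[OF p0 True] C1 e_bd[of "int l - int t"] by simp
  next
    case False
    have "cos (pi * of_int (int l + int t)) = cos (pi * of_int (int l - int t) + 2 * pi * of_int (int t))"
      by (simp add: algebra_simps)
    also have "\<dots> = cos (pi * of_int (int l - int t))"
      using cos_int_2pin[of "int t"] sin_int_2pin[of "int t"] by (simp add: cos_add)
    finally have "e (int l + int t) = e (int l - int t)" by (simp add: e_def)
    then show ?thesis using Gs_split[OF p0, of l t] Cs_ndvd[OF p False] C1 by (simp add: e_def)
  qed
  thus ?thesis using pos by simp
qed


lemma cos_lt1:
  assumes "t < p" "l < p" "l \<noteq> t"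
  shows "cos (2*pi/real p * real t - 2*pi/real p * real l) < 1"
proof -
  have p0: "real p > 0" using assms by simp
  have "cos (2*pi/real p * real t - 2*pi/real p * real l) \<noteq> 1"
  proof
    assume "cos (2*pi/real p * real t - 2*pi/real p * real l) = 1"
    then obtain n :: int where n: "2*pi/real p * real t - 2*pi/real p * real l = of_int n * 2 * pi"
      by (auto simp: cos_one_2pi_int)
    hence "(2*pi) * ((real t - real l) / real p) = (2*pi) * of_int n" using p0 by (simp add: field_simps)
    moreover have nz: "2*pi \<noteq> (0::real)" by simp
    ultimately have "(real t - real l) / real p = of_int n" by (simp only: mult_left_cancel[OF nz])
    hence "real t - real l = real p * of_int n" using p0 by (simp add: field_simps)
    hence "real_of_int (int t - int l) = real_of_int (int p * n)" by simp
    hence "int t - int l = int p * n" by (simp only: of_int_eq_iff)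
    hence "int p dvd (int t - int l)" by simp
    hence "int t mod int p = int l mod int p" by (simp add: mod_eq_dvd_iff)
    thus False using assms by simp
  qed
  thus ?thesis using cos_le_one[of "2*pi/real p * real t - 2*pi/real p * real l"] by linarith
qed

definition W1 :: "nat \<Rightarrow> nat \<Rightarrow> nat \<Rightarrow> real" where "W1 p j r = 2*pi/real p * real r"
definition V1 :: "nat \<Rightarrow> nat \<Rightarrow> nat \<Rightarrow> real" where
  "V1 p l j = (if j = 0 then sin (2*pi/real p * real l) else cos (2*pi/real p * real l))"
definition b1 :: "nat \<Rightarrow> real" where "b1 j = (if j = 0 then 0 else pi/2)"

lemma score1:
  assumes "p > 0" "ss \<in> samples p m"
  shows "score p 2 (W1 p) (V1 p) b1 (Xvec ss) l
         = cos (2*pi/real p * real (sum_list ss mod p) - 2*pi/real p * real l)"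
proof -
  have set: "set ss \<subseteq> {0..<p}" using assms by (simp add: samples_def)
  have th: "(\<Sum>r<p. W1 p j r * Xvec ss r) = 2*pi/real p * real (sum_list ss)" for j
    using lin_sum[OF set, of "2*pi/real p"] by (simp add: W1_def)
  have rs: "sin (2*pi/real p * real (sum_list ss)) = sin (2*pi/real p * real (sum_list ss mod p))"
       "cos (2*pi/real p * real (sum_list ss)) = cos (2*pi/real p * real (sum_list ss mod p))"
    using reduce_mod[OF assms(1), of 1 "sum_list ss"] by simp_all
  have "score p 2 (W1 p) (V1 p) b1 (Xvec ss) l
     = sin (2*pi/real p * real l) * sin (2*pi/real p * real (sum_list ss))
       + cos (2*pi/real p * real l) * cos (2*pi/real p * real (sum_list ss))"
    by (simp add: score_def numeral_2_eq_2 th V1_def b1_def sin_add)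
  also have "\<dots> = cos (2*pi/real p * real (sum_list ss mod p) - 2*pi/real p * real l)"
    unfolding rs by (simp add: cos_diff algebra_simps)
  finally show ?thesis .
qed

definition W2 :: "nat \<Rightarrow> nat \<Rightarrow> nat \<Rightarrow> real" where "W2 p j r = 2*pi/real p * real (Suc j) * real r"
definition V2 :: "nat \<Rightarrow> nat \<Rightarrow> nat \<Rightarrow> real" where
  "V2 p l j = sin (2*pi/real p * real (Suc j) * real l)"

lemma score2:
  assumes "p > 0" "ss \<in> samples p m"
  shows "score p ((p - 1) div 2) (W2 p) (V2 p) (\<lambda>_. 0) (Xvec ss) l = Gs p l (sum_list ss mod p)"
proof -
  have set: "set ss \<subseteq> {0..<p}" using assms by (simp add: samples_def)
  have th: "(\<Sum>r<p. W2 p j r * Xvec ss r) = 2*pi/real p * real (Suc j) * real (sum_list ss)" for j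
    using lin_sum[OF set, of "2*pi/real p * real (Suc j)"] by (simp add: W2_def)
  show ?thesis
    unfolding score_def Gs_def
  proof (rule sum.cong[OF refl])
    fix j
    have "sin (2*pi/real p * real (Suc j) * real (sum_list ss)) = sin (2*pi/real p * real (Suc j) * real (sum_list ss mod p))"
      by (rule reduce_mod(1)[OF assms(1)])
    thus "V2 p l j * sin ((\<Sum>r<p. W2 p j r * Xvec ss r) + 0) =
      sin (2*pi/real p * real (Suc j) * real l) * sin (2*pi/real p * real (Suc j) * real (sum_list ss mod p))"
      by (simp only: th V2_def add_0_right)
  qed
qed

lemma good2:
  assumes "p \<ge> 2" "ss \<in> samples p m" "sum_list ss mod p \<noteq> 0" "2 * (sum_list ss mod p) \<noteq> p"
  shows "predictor p (score p ((p - 1) div 2) (W2 p) (V2 p) (\<lambda>_. 0)) (Xvec ss) = Some (Ylab p ss)"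
proof -
  have p0: "p > 0" using assms by simp
  show ?thesis unfolding Ylab_def
  proof (rule predictor_some)
    show "sum_list ss mod p < p" using p0 by simp
    fix k assume "k < p" "k \<noteq> sum_list ss mod p"
    thus "score p ((p - 1) div 2) (W2 p) (V2 p) (\<lambda>_. 0) (Xvec ss) k
        < score p ((p - 1) div 2) (W2 p) (V2 p) (\<lambda>_. 0) (Xvec ss) (sum_list ss mod p)"
      unfolding score2[OF p0 assms(2)] using Gs_lt[OF assms(1) _ assms(3) assms(4)] p0 by simp
  qed
qed

lemma acc_bound:
  assumes p: "p \<ge> 2" and m: "m \<ge> 1"
    and sub: "samples p m - B \<subseteq> {ss \<in> samples p m. h (Xvec ss) = Some (Ylab p ss)}"
    and B: "card B \<le> k * p ^ (m - 1)" "finite B"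
  shows "accuracy p m h \<ge> 1 - real k / real p"
proof -
  let ?G = "{ss \<in> samples p m. h (Xvec ss) = Some (Ylab p ss)}"
  have fG: "finite ?G" using finite_samples by simp
  have "card (samples p m) - card B \<le> card (samples p m - B)" by (rule diff_card_le_card_Diff[OF B(2)])
  also have "\<dots> \<le> card ?G" by (rule card_mono[OF fG sub])
  finally have "p ^ m - card B \<le> card ?G" by (simp add: card_samples)
  hence "real (p ^ m) - real (card B) \<le> real (card ?G)" by linarith
  moreover have "real (card B) \<le> real (k * p ^ (m - 1))" using B(1) by (simp only: of_nat_le_iff)
  hence "real (card B) \<le> real k * real p ^ (m - 1)" by simp
  ultimately have c: "real p ^ m - real k * real p ^ (m - 1) \<le> real (card ?G)" by simp
  have mm: "m = Suc (m - 1)" using m by simp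
  have pm: "real p ^ m = real p * real p ^ (m - 1)" by (subst mm) (simp only: power_Suc diff_Suc_1)
  have pos: "real p ^ (m - 1) > 0" using p by simp
  have "1 - real k / real p = (real p ^ m - real k * real p ^ (m - 1)) / real p ^ m"
    using p pos unfolding pm by (simp add: field_simps)
  also have "\<dots> \<le> real (card ?G) / real p ^ m" using c pos p by (simp add: divide_right_mono)
  finally show ?thesis by (simp add: accuracy_def)
qed


lemma good1:
  assumes "p > 0" "ss \<in> samples p m"
  shows "predictor p (score p 2 (W1 p) (V1 p) b1) (Xvec ss) = Some (Ylab p ss)"
  unfolding Ylab_def
proof (rule predictor_some)
  show "sum_list ss mod p < p" using assms by simp
  fix k assume k: "k < p" "k \<noteq> sum_list ss mod p"
  show "score p 2 (W1 p) (V1 p) b1 (Xvec ss) k < score p 2 (W1 p) (V1 p) b1 (Xvec ss) (sum_list ss mod p)"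
    unfolding score1[OF assms] using cos_lt1[of "sum_list ss mod p" p k] k assms(1) by simp
qed

theorem mainTheorem2:
  fixes p :: nat
  assumes "p \<ge> 2"
  shows "(\<exists>(W :: nat \<Rightarrow> nat \<Rightarrow> real) (V :: nat \<Rightarrow> nat \<Rightarrow> real) (b :: nat \<Rightarrow> real).
            \<forall>m::nat. m \<ge> 2 \<longrightarrow> accuracy p m (predictor p (score p 2 W V b)) = 1)
       \<and> (\<exists>(W :: nat \<Rightarrow> nat \<Rightarrow> real) (V :: nat \<Rightarrow> nat \<Rightarrow> real).
            \<forall>m::nat. m \<ge> 2 \<longrightarrow>
              (odd p \<longrightarrow> accuracy p m (predictor p (score p ((p - 1) div 2) W V (\<lambda>_. 0)))
                           \<ge> 1 - 1 / real p) \<and>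
              (even p \<longrightarrow> accuracy p m (predictor p (score p ((p - 1) div 2) W V (\<lambda>_. 0)))
                           \<ge> 1 - 2 / real p))"
proof (intro conjI)
  have p0: "p > 0" using assms by simp
  show "\<exists>(W :: nat \<Rightarrow> nat \<Rightarrow> real) (V :: nat \<Rightarrow> nat \<Rightarrow> real) (b :: nat \<Rightarrow> real).
            \<forall>m::nat. m \<ge> 2 \<longrightarrow> accuracy p m (predictor p (score p 2 W V b)) = 1"
  proof (intro exI allI impI)
    fix m :: nat
    have "{ss \<in> samples p m. predictor p (score p 2 (W1 p) (V1 p) b1) (Xvec ss) = Some (Ylab p ss)} = samples p m"
      using good1[OF p0] by blast
    thus "accuracy p m (predictor p (score p 2 (W1 p) (V1 p) b1)) = 1"
      using p0 by (simp add: accuracy_def card_samples)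
  qed
  show "\<exists>(W :: nat \<Rightarrow> nat \<Rightarrow> real) (V :: nat \<Rightarrow> nat \<Rightarrow> real).
            \<forall>m::nat. m \<ge> 2 \<longrightarrow>
              (odd p \<longrightarrow> accuracy p m (predictor p (score p ((p - 1) div 2) W V (\<lambda>_. 0)))
                           \<ge> 1 - 1 / real p) \<and>
              (even p \<longrightarrow> accuracy p m (predictor p (score p ((p - 1) div 2) W V (\<lambda>_. 0)))
                           \<ge> 1 - 2 / real p)"
  proof (intro exI allI impI conjI)
    fix m :: nat assume m2: "m \<ge> 2"
    hence m1: "m \<ge> 1" by simp
    let ?h = "predictor p (score p ((p - 1) div 2) (W2 p) (V2 p) (\<lambda>_. 0))"
    let ?R = "\<lambda>c. {ss \<in> samples p m. sum_list ss mod p = c}"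
    have fR: "finite (?R c)" for c using finite_samples by simp
    have cR: "card (?R c) \<le> p ^ (m - 1)" for c by (rule card_residue[OF m1 p0])
    {
      assume odd: "odd p"
      have sub: "samples p m - ?R 0 \<subseteq> {ss \<in> samples p m. ?h (Xvec ss) = Some (Ylab p ss)}"
      proof
        fix ss assume "ss \<in> samples p m - ?R 0"
        hence ss: "ss \<in> samples p m" "sum_list ss mod p \<noteq> 0" by auto
        have "2 * (sum_list ss mod p) \<noteq> p"
        proof
          assume "2 * (sum_list ss mod p) = p"
          hence "even p" by (metis dvd_triv_left)
          thus False using odd by simp
        qed
        thus "ss \<in> {ss \<in> samples p m. ?h (Xvec ss) = Some (Ylab p ss)}"
          using good2[OF assms ss(1) ss(2)] ss(1) by simp
      qed
      have "accuracy p m ?h \<ge> 1 - real 1 / real p"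
        by (rule acc_bound[OF assms m1 sub _ fR]) (use cR in simp)
      thus "accuracy p m ?h \<ge> 1 - 1 / real p" by simp
    }
    {
      assume ev: "even p"
      have sub: "samples p m - (?R 0 \<union> ?R (p div 2)) \<subseteq> {ss \<in> samples p m. ?h (Xvec ss) = Some (Ylab p ss)}"
      proof
        fix ss assume "ss \<in> samples p m - (?R 0 \<union> ?R (p div 2))"
        hence ss: "ss \<in> samples p m" "sum_list ss mod p \<noteq> 0" "sum_list ss mod p \<noteq> p div 2" by auto
        have "2 * (sum_list ss mod p) \<noteq> p" using ss(3) by auto
        thus "ss \<in> {ss \<in> samples p m. ?h (Xvec ss) = Some (Ylab p ss)}"
          using good2[OF assms ss(1) ss(2)] ss(1) by simp
      qed
      have "card (?R 0 \<union> ?R (p div 2)) \<le> card (?R 0) + card (?R (p div 2))" by (rule card_Un_le)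
      also have "\<dots> \<le> 2 * p ^ (m - 1)" using cR[of 0] cR[of "p div 2"] by simp
      finally have cB: "card (?R 0 \<union> ?R (p div 2)) \<le> 2 * p ^ (m - 1)" .
      have "accuracy p m ?h \<ge> 1 - real 2 / real p"
        by (rule acc_bound[OF assms m1 sub cB]) (use fR in simp)
      thus "accuracy p m ?h \<ge> 1 - 2 / real p" by simp
    }
  qed
qed

end
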